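(* Let $p\ge2$ be an integer, $A_0\in GL_{n_1}(\mathbb{C})$ and $B_0\in GL_{n_2}(\mathbb{C})$. If $T\in\mathcal{M}_{n_2,n_1}(\mathbb{C}((z)))$ satisfies $\phi_p(T)A_0=B_0T$, then $T\in\mathcal{M}_{n_2,n_1}(\mathbb{C})$.
   Context: $\mathbb{C}((z))$ is the field of formal Laurent series and $\phi_p$ acts entrywise by $f(z)\mapsto f(z^p)$. *)

theory Defs
  imports "HOL-Analysis.Analysis" "HOL-Computational_Algebra.Formal_Laurent_Series"
begin

definition phi_mat :: "nat \<Rightarrow> 'a::zero fls ^'n ^'m \<Rightarrow> 'a fls ^'n ^'m" where
  "phi_mat p T = (\<chi> i j. fls_compose_power (T $ i $ j) p)"

definition const_mat :: "'a::zero ^'n ^'m \<Rightarrow> 'a fls ^'n ^'m" where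
  "const_mat A = (\<chi> i j. fls_const (A $ i $ j))"

end

theory Submission
  imports Defs
begin

definition coefm :: "'a::zero fls ^'n ^'m \<Rightarrow> int \<Rightarrow> 'a ^'n ^'m" where
  "coefm T k = (\<chi> i j. fls_nth (T $ i $ j) k)"

lemma coefm_phi:
  fixes T :: "complex fls ^'n1 ^'n2" and A :: "complex ^'n1 ^'n1"
  assumes "p > 0"
  shows "coefm (phi_mat p T ** const_mat A) k
     = (if int p dvd k then coefm T (k div int p) else 0) ** A"
  using assms
  by (auto simp: vec_eq_iff coefm_def matrix_matrix_mult_def fls_nth_sum phi_mat_def
      const_mat_def fls_nth_compose_power)

lemma coefm_const:
  fixes T :: "complex fls ^'n1 ^'n2" and B :: "complex ^'n2 ^'n2"
  shows "coefm (const_mat B ** T) k = B ** coefm T k"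
  by (auto simp: vec_eq_iff coefm_def matrix_matrix_mult_def fls_nth_sum
      const_mat_def mult.commute)

theorem mainTheorem14:
  fixes p :: nat
    and A0 :: "complex ^'n1 ^'n1"
    and B0 :: "complex ^'n2 ^'n2"
    and T :: "complex fls ^'n1 ^'n2"
  assumes "p \<ge> 2"
    and "invertible A0"
    and "invertible B0"
    and "phi_mat p T ** const_mat A0 = const_mat B0 ** T"
  shows "\<exists>C :: complex ^'n1 ^'n2. T = const_mat C"
proof -
  obtain B' where B': "B' ** B0 = mat 1"
    using assms(3) unfolding invertible_def by blast
  have rec: "coefm T k = B' ** ((if int p dvd k then coefm T (k div int p) else 0) ** A0)" for k
  proof -
    have "B0 ** coefm T k = (if int p dvd k then coefm T (k div int p) else 0) ** A0"
      using coefm_phi[of p T A0 k] coefm_const[of B0 T k] assms(1,4) by simp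
    hence "B' ** (B0 ** coefm T k) = B' ** ((if int p dvd k then coefm T (k div int p) else 0) ** A0)"
      by simp
    thus ?thesis by (simp add: matrix_mul_assoc B')
  qed
  have zero: "k \<noteq> 0 \<Longrightarrow> coefm T k = 0" for k
  proof (induction "nat \<bar>k\<bar>" arbitrary: k rule: less_induct)
    case less
    show ?case
    proof (cases "int p dvd k")
      case False
      then show ?thesis using rec[of k] by simp
    next
      case True
      then obtain j where j: "k = int p * j" by blast
      have "j \<noteq> 0" using less.prems j by auto
      have "nat \<bar>j\<bar> < nat \<bar>k\<bar>" using j \<open>j \<noteq> 0\<close> assms(1)
        by (simp add: abs_mult)
      hence "coefm T j = 0" using less.hyps \<open>j \<noteq> 0\<close> by blast
      moreover have "k div int p = j" using j assms(1) by simp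
      ultimately show ?thesis using rec[of k] True by simp
    qed
  qed
  have "T = const_mat (coefm T 0)"
  proof -
    have "fls_nth (T $ i $ j) n = fls_nth (const_mat (coefm T 0) $ i $ j) n" for i j n
    proof (cases "n = 0")
      case True then show ?thesis by (simp add: const_mat_def coefm_def)
    next
      case False
      then have "coefm T n $ i $ j = 0" using zero by simp
      then show ?thesis using False by (simp add: const_mat_def coefm_def)
    qed
    thus ?thesis by (simp add: vec_eq_iff fls_eq_iff)
  qed
  thus ?thesis by blast
qed

end
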